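(* Let $\mathcal C$ be a concept hierarchy, $r_1,r_2,\epsilon\in[0,1]$, $a>0$ a real with $r_1\le ar_2(1-\epsilon)$, $m$ a positive integer, and let $\mathcal A_1$ and $\mathcal L$ be the networks defined below (with $\mathcal L$ having fixed sets $F$ and $E$ satisfying the stated constraints). Then $\mathcal L$ $implements_1$ $\mathcal A_1$: for every $B\subseteq C_0$, in the executions of $\mathcal A_1$ and $\mathcal L$ on input $B$, for every concept $c$, if $rep(c)$ fires at time $level(c)$ in $\mathcal A_1$, then at least $m(1-\epsilon)$ of the neurons in $reps(c)$ fire at time $level(c)$ in $\mathcal L$.
   Context: Concept hierarchies: fix positive integers $\ell_{max},n,k$. A universal set $D$ of concepts is partitioned into disjoint sets $D_0,\dots,D_{\ell_{max}}$ with $|D_0|=n$; $level(c)=\ell$ for $c\in D_\ell$. A concept hierarchy $\mathcal C$ consists of $C\subseteq D$, with $C_\ell=C\cap D_\ell$, and for each $c\in C_\ell$ with $1\le\ell\le\ell_{max}$ a set $children(c)\subseteq C_{\ell-1}$, such that $|C_{\ell_{max}}|=k$, $|children(c)|=k$ for all such $c$, and $children(c)\cap children(c')=\emptyset$ for distinct $c,c'\in C_\ell$. Common network dynamics: neurons partitioned into layers $N_0,\dots,N_{\ell_{max}}$; threshold $\tau$; weights $w(u,v)\in\{0,1\}$ for $u\in N_{\ell-1}$, $v\in N_\ell$. Failed neurons never fire. A non-failed neuron $v\in N_\ell$, $\ell\ge1$, does not fire at time 0 and fires at time $t\ge1$ iff $\sum_{u\in N_{\ell-1}}w(u,v)x_u(t-1)\ge\tau$,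 where $x_u(s)\in\{0,1\}$ indicates whether $u$ fires at time $s$. $\mathcal A_1$: no failures; each $c\in D_0$ has $rep(c)\in N_0$, each $c\in C$ with $level(c)\ge1$ has $rep(c)\in N_{level(c)}$, all distinct; $w(u,v)=1$ iff $v=rep(c)$, $u=rep(c')$ for a child $c'$ of $c$, else $0$; $\tau=r_2k$. Input $B\subseteq C_0$: the layer-0 neurons $rep(b)$, $b\in B$, fire at time 0, no other layer-0 neuron fires at time 0, and no layer-0 neuron fires at any other time. $\mathcal L$: each $c\in D_0$ has a set $reps(c)$ of $m$ neurons in $N_0$, each $c\in C$ with $level(c)\ge1$ a set $reps(c)$ of $m$ neurons in $N_{level(c)}$, all pairwise disjoint. $E$ is a set of pairs $(u,v)$ with $v\in reps(c)$ and $u\in reps(c')$ for some child $c'$ of $c$; $w(u,v)=1$ iff $(u,v)\in E$, else $0$. Threshold $\tau=ar_2km(1-\epsilon)$. A fixed set $F$ of neurons is failed. Constraints: for every concept $c$, at least $m(1-\epsilon)$ neurons of $reps(c)$ are not in $F$; and for every $c$ with $level(c)\ge1$, every $v\in reps(c)$ and every child $c'$ of $c$, there are at least $am(1-\epsilon)$ neurons $u\in reps(c')\setminus F$ with $(u,v)\in E$. Input $B\subseteq C_0$: a layer-0 neuron fires at time 0 iff it is in $\bigcup_{b\in B}reps(b)\setminus F$, and no layer-0 neuron fires at any other time. *)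

theory Defs
  imports Complex_Main
begin

text \<open>The universal set D of concepts is partitioned into
  D_0, ..., D_lmax by the level function lvl (D_l = {c in D. lvl c = l}).
  C is the set of concepts of the hierarchy, C_l = {c in C. lvl c = l}.\<close>
definition concept_hierarchy ::
  "nat \<Rightarrow> nat \<Rightarrow> nat \<Rightarrow> 'c set \<Rightarrow> ('c \<Rightarrow> nat) \<Rightarrow> 'c set \<Rightarrow> ('c \<Rightarrow> 'c set) \<Rightarrow> bool" where
  "concept_hierarchy lmax n k D lvl C children \<longleftrightarrow>
     (\<forall>c\<in>D. lvl c \<le> lmax) \<and>
     card {c\<in>D. lvl c = 0} = n \<and>
     C \<subseteq> D \<and>
     card {c\<in>C. lvl c = lmax} = k \<and>
     (\<forall>c\<in>C. 1 \<le> lvl c \<longrightarrow>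
        children c \<subseteq> {c'\<in>C. lvl c' = lvl c - 1} \<and> card (children c) = k) \<and>
     (\<forall>c\<in>C. \<forall>c'\<in>C. lvl c = lvl c' \<and> 1 \<le> lvl c \<and> c \<noteq> c' \<longrightarrow>
        children c \<inter> children c' = {})"

text \<open>Common network dynamics. N: (finite) set of neurons, lay: layer of a neuron,
  w: weights, tau: threshold, F: failed neurons, I: layer-0 neurons firing at time 0.
  fires ... t v  means x_v(t) = 1.\<close>
fun fires :: "'n set \<Rightarrow> ('n \<Rightarrow> nat) \<Rightarrow> ('n \<Rightarrow> 'n \<Rightarrow> real) \<Rightarrow> real \<Rightarrow> 'n set \<Rightarrow> 'n set
              \<Rightarrow> nat \<Rightarrow> 'n \<Rightarrow> bool" where
  "fires N lay w \<tau> F I 0 v = (v \<in> N \<and> v \<notin> F \<and> lay v = 0 \<and> v \<in> I)"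
| "fires N lay w \<tau> F I (Suc t) v =
     (v \<in> N \<and> v \<notin> F \<and> 1 \<le> lay v \<and>
      \<tau> \<le> (\<Sum>u\<in>{u\<in>N. lay u = lay v - 1}. w u v * (if fires N lay w \<tau> F I t u then 1 else 0)))"

definition A1_weight :: "('c \<Rightarrow> nat) \<Rightarrow> 'c set \<Rightarrow> ('c \<Rightarrow> 'c set) \<Rightarrow> ('c \<Rightarrow> 'n) \<Rightarrow> 'n \<Rightarrow> 'n \<Rightarrow> real" where
  "A1_weight lvl C children rep u v =
     (if \<exists>c\<in>C. 1 \<le> lvl c \<and> v = rep c \<and> (\<exists>c'\<in>children c. u = rep c') then 1 else 0)"

definition L_weight :: "('n \<times> 'n) set \<Rightarrow> 'n \<Rightarrow> 'n \<Rightarrow> real" where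
  "L_weight E u v = (if (u, v) \<in> E then 1 else 0)"

end

theory Submission
  imports Defs
begin

theorem theorem8p1:
  fixes lmax n k m :: nat
    and D C :: "'c set" and lvl :: "'c \<Rightarrow> nat" and children :: "'c \<Rightarrow> 'c set"
    and r1 r2 \<epsilon> a :: real
    and N1 :: "'n set" and lay1 :: "'n \<Rightarrow> nat" and rep :: "'c \<Rightarrow> 'n"
    and N2 :: "'m set" and lay2 :: "'m \<Rightarrow> nat" and reps :: "'c \<Rightarrow> 'm set"
    and E :: "('m \<times> 'm) set" and F :: "'m set"
  assumes pos: "0 < lmax" "0 < n" "0 < k" "0 < m"
    and CH: "concept_hierarchy lmax n k D lvl C children"
    and r1: "0 \<le> r1" "r1 \<le> 1" and r2: "0 \<le> r2" "r2 \<le> 1" and eps: "0 \<le> \<epsilon>" "\<epsilon> \<le> 1"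
    and a: "0 < a" and r1_le: "r1 \<le> a * r2 * (1 - \<epsilon>)"
    \<comment> \<open>network A_1\<close>
    and N1_fin: "finite N1" and N1_lay: "\<forall>v\<in>N1. lay1 v \<le> lmax"
    and rep_N: "\<forall>c\<in>{c\<in>D. lvl c = 0} \<union> C. rep c \<in> N1 \<and> lay1 (rep c) = lvl c"
    and rep_inj: "inj_on rep ({c\<in>D. lvl c = 0} \<union> C)"
    \<comment> \<open>network L\<close>
    and N2_fin: "finite N2" and N2_lay: "\<forall>v\<in>N2. lay2 v \<le> lmax"
    and reps_N: "\<forall>c\<in>{c\<in>D. lvl c = 0} \<union> C.
                   reps c \<subseteq> N2 \<and> card (reps c) = m \<and> (\<forall>v\<in>reps c. lay2 v = lvl c)"
    and reps_disj: "\<forall>c\<in>{c\<in>D. lvl c = 0} \<union> C. \<forall>c'\<in>{c\<in>D. lvl c = 0} \<union> C.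
                      c \<noteq> c' \<longrightarrow> reps c \<inter> reps c' = {}"
    and E_sub: "E \<subseteq> {(u, v). \<exists>c\<in>C. 1 \<le> lvl c \<and> v \<in> reps c \<and> (\<exists>c'\<in>children c. u \<in> reps c')}"
    and F_ok: "\<forall>c\<in>{c\<in>D. lvl c = 0} \<union> C. real (card (reps c - F)) \<ge> real m * (1 - \<epsilon>)"
    and E_ok: "\<forall>c\<in>C. 1 \<le> lvl c \<longrightarrow> (\<forall>v\<in>reps c. \<forall>c'\<in>children c.
                 real (card {u\<in>reps c' - F. (u, v) \<in> E}) \<ge> a * real m * (1 - \<epsilon>))"
  shows "\<forall>B \<subseteq> {c\<in>C. lvl c = 0}. \<forall>c\<in>{c\<in>D. lvl c = 0} \<union> C.
           fires N1 lay1 (A1_weight lvl C children rep) (r2 * real k) {} (rep ` B) (lvl c) (rep c)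
           \<longrightarrow> real (card {v\<in>reps c.
                 fires N2 lay2 (L_weight E) (a * r2 * real k * real m * (1 - \<epsilon>)) F
                       (\<Union>b\<in>B. reps b - F) (lvl c) v}) \<ge> real m * (1 - \<epsilon>)"
proof (intro allI impI ballI)
  fix B c
  assume B: "B \<subseteq> {c\<in>C. lvl c = 0}"
  define D0 where "D0 = {c\<in>D. lvl c = 0} \<union> C"
  define f1 where "f1 = fires N1 lay1 (A1_weight lvl C children rep) (r2 * real k) {} (rep ` B)"
  define f2 where "f2 = fires N2 lay2 (L_weight E) (a * r2 * real k * real m * (1 - \<epsilon>)) F
                       (\<Union>b\<in>B. reps b - F)"
  have ch: "\<And>c c'. c \<in> C \<Longrightarrow> 1 \<le> lvl c \<Longrightarrow> c' \<in> children c \<Longrightarrow> c' \<in> C \<and> lvl c' = lvl c - 1"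
    using CH unfolding concept_hierarchy_def by blast
  have chfin: "\<And>c. c \<in> C \<Longrightarrow> 1 \<le> lvl c \<Longrightarrow> finite (children c)"
    using CH pos(3) unfolding concept_hierarchy_def by (metis card.infinite less_irrefl)
  have rC: "\<And>c. c \<in> C \<Longrightarrow> reps c \<subseteq> N2 \<and> (\<forall>v\<in>reps c. lay2 v = lvl c)"
    using reps_N by blast
  have key: "\<And>c. c \<in> D0 \<Longrightarrow> lvl c = l \<Longrightarrow> f1 l (rep c) \<Longrightarrow> \<forall>v\<in>reps c - F. f2 l v" for l
  proof (induction l)
    case 0
    then have "rep c \<in> rep ` B" unfolding f1_def by simp
    then obtain b where b: "b \<in> B" "rep c = rep b" by auto
    have "b \<in> D0" using B b D0_def by auto
    then have "c = b" using rep_inj b 0 unfolding D0_def inj_on_def by blast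
    have "b \<in> {c\<in>D. lvl c = 0} \<union> C" using \<open>b \<in> D0\<close> D0_def by simp
    then have rb: "reps b \<subseteq> N2 \<and> (\<forall>v\<in>reps b. lay2 v = lvl b)"
      using reps_N by blast
    have "lvl b = 0" using \<open>c = b\<close> 0 by simp
    then have "reps b \<subseteq> N2" "\<forall>v\<in>reps b. lay2 v = 0" using rb by auto
    then show ?case using b \<open>c = b\<close> unfolding f2_def by auto
  next
    case (Suc l)
    have cC: "c \<in> C" using Suc.prems unfolding D0_def by auto
    have lc: "1 \<le> lvl c" using Suc.prems by simp
    have chc: "\<And>c'. c' \<in> children c \<Longrightarrow> c' \<in> C \<and> lvl c' = l"
      using ch[OF cC lc] Suc.prems by simp
    have finch: "finite (children c)" using chfin[OF cC lc] .
    define S where "S = {c'\<in>children c. f1 l (rep c')}"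
    have finS: "finite S" using finch S_def by simp
    have repc: "rep c \<in> N1" "lay1 (rep c) = Suc l"
      using rep_N cC Suc.prems by auto
    define U1 where "U1 = {u\<in>N1. lay1 u = l \<and> u \<in> rep ` children c \<and> f1 l u}"
    have wt: "A1_weight lvl C children rep u (rep c) * (if f1 l u then 1 else 0)
              = (if u \<in> rep ` children c \<and> f1 l u then 1 else 0)" for u
    proof -
      have "(\<exists>c''\<in>C. 1 \<le> lvl c'' \<and> rep c = rep c'' \<and> (\<exists>c'\<in>children c''. u = rep c'))
             \<longleftrightarrow> u \<in> rep ` children c"
      proof
        assume "\<exists>c''\<in>C. 1 \<le> lvl c'' \<and> rep c = rep c'' \<and> (\<exists>c'\<in>children c''. u = rep c')"
        then obtain c'' where "c'' \<in> C" "rep c = rep c''" "\<exists>c'\<in>children c''. u = rep c'" by blast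
        moreover have "c'' = c" using rep_inj cC \<open>c'' \<in> C\<close> \<open>rep c = rep c''\<close>
          unfolding inj_on_def by blast
        ultimately show "u \<in> rep ` children c" by auto
      next
        assume "u \<in> rep ` children c"
        then show "\<exists>c''\<in>C. 1 \<le> lvl c'' \<and> rep c = rep c'' \<and> (\<exists>c'\<in>children c''. u = rep c')"
          using cC lc by blast
      qed
      then show ?thesis unfolding A1_weight_def by auto
    qed
    have "r2 * real k \<le> (\<Sum>u\<in>{u\<in>N1. lay1 u = l}.
            A1_weight lvl C children rep u (rep c) * (if f1 l u then 1 else 0))"
      using Suc.prems(3) repc unfolding f1_def by simp
    also have "\<dots> = (\<Sum>u\<in>{u\<in>N1. lay1 u = l}. (if u \<in> rep ` children c \<and> f1 l u then 1 else 0))"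
      using wt by simp
    also have "\<dots> = real (card U1)"
      using N1_fin by (simp add: sum.If_cases U1_def conj_commute Int_def conj_assoc)
    also have "card U1 \<le> card S"
    proof -
      have "U1 \<subseteq> rep ` S" unfolding U1_def S_def by auto
      then have "card U1 \<le> card (rep ` S)" using finS by (simp add: card_mono)
      also have "\<dots> \<le> card S" using card_image_le finS by blast
      finally show ?thesis .
    qed
    finally have cardS: "r2 * real k \<le> real (card S)" by simp
    have IH: "\<And>c'. c' \<in> S \<Longrightarrow> \<forall>u\<in>reps c' - F. f2 l u"
      using Suc.IH chc unfolding S_def D0_def by auto
    show ?case
    proof
      fix v assume v: "v \<in> reps c - F"
      have vN: "v \<in> N2" "lay2 v = Suc l" using v rC[OF cC] Suc.prems by auto
      define W where "W c' = {u\<in>reps c' - F. (u, v) \<in> E}" for c'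
      define U2 where "U2 = (\<Union>c'\<in>S. W c')"
      have finW: "\<And>c'. c' \<in> S \<Longrightarrow> finite (W c')"
      proof -
        fix c' assume "c' \<in> S"
        then have "reps c' \<subseteq> N2" using rC chc unfolding S_def by blast
        then have "W c' \<subseteq> N2" unfolding W_def by auto
        then show "finite (W c')" by (rule finite_subset[OF _ N2_fin])
      qed
      have disj: "\<forall>i\<in>S. \<forall>j\<in>S. i \<noteq> j \<longrightarrow> W i \<inter> W j = {}"
        using reps_disj chc unfolding W_def S_def by blast
      have "card U2 = (\<Sum>c'\<in>S. card (W c'))"
        unfolding U2_def using card_UN_disjoint[OF finS _ disj] finW by simp
      then have "real (card U2) = (\<Sum>c'\<in>S. real (card (W c')))" by simp
      also have "\<dots> \<ge> (\<Sum>c'\<in>S. a * real m * (1 - \<epsilon>))"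
        apply (rule sum_mono)
        using E_ok cC lc v unfolding W_def S_def by auto
      finally have "real (card U2) \<ge> real (card S) * (a * real m * (1 - \<epsilon>))" by simp
      moreover have "r2 * real k * (a * real m * (1 - \<epsilon>)) \<le> real (card S) * (a * real m * (1 - \<epsilon>))"
        apply (rule mult_right_mono[OF cardS]) using a eps by simp
      ultimately have thr: "a * r2 * real k * real m * (1 - \<epsilon>) \<le> real (card U2)"
        by (simp add: algebra_simps)
      have U2sub: "U2 \<subseteq> {u\<in>N2. lay2 u = lay2 v - 1}"
      proof
        fix u assume "u \<in> U2"
        then obtain c' where c': "c' \<in> S" "u \<in> reps c'" unfolding U2_def W_def by auto
        then have "c' \<in> C" "lvl c' = l" using chc unfolding S_def by auto
        then show "u \<in> {u\<in>N2. lay2 u = lay2 v - 1}" using rC c'(2) vN by auto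
      qed
      have finD: "finite {u\<in>N2. lay2 u = lay2 v - 1}" using N2_fin by simp
      have "real (card U2) = (\<Sum>u\<in>U2. L_weight E u v * (if f2 l u then 1 else 0))"
      proof -
        have "\<And>u. u \<in> U2 \<Longrightarrow> L_weight E u v * (if f2 l u then 1 else 0) = 1"
          using IH unfolding U2_def W_def L_weight_def by auto
        then show ?thesis by simp
      qed
      also have "\<dots> \<le> (\<Sum>u\<in>{u\<in>N2. lay2 u = lay2 v - 1}. L_weight E u v * (if f2 l u then 1 else 0))"
        by (rule sum_mono2[OF finD U2sub]) (simp add: L_weight_def)
      finally show "f2 (Suc l) v"
        using thr vN v unfolding f2_def by simp
    qed
  qed
  assume c: "c \<in> {c\<in>D. lvl c = 0} \<union> C"
  assume fc: "fires N1 lay1 (A1_weight lvl C children rep) (r2 * real k) {} (rep ` B) (lvl c) (rep c)"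
  have all: "\<forall>v\<in>reps c - F. f2 (lvl c) v"
    using key[of c "lvl c"] c fc unfolding D0_def f1_def by blast
  have fin: "finite (reps c)" using reps_N c N2_fin finite_subset by blast
  have "reps c - F \<subseteq> {v\<in>reps c. f2 (lvl c) v}" using all by auto
  then have "card (reps c - F) \<le> card {v\<in>reps c. f2 (lvl c) v}"
    using fin by (intro card_mono) auto
  then show "real (card {v\<in>reps c.
                 fires N2 lay2 (L_weight E) (a * r2 * real k * real m * (1 - \<epsilon>)) F
                       (\<Union>b\<in>B. reps b - F) (lvl c) v}) \<ge> real m * (1 - \<epsilon>)"
    using F_ok c unfolding f2_def by force
qed

end
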